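(* Let $\tilde N=2^{k\tilde m}$ with $1\le\tilde m<m$, and let $\varphi_{\tilde N,z}=\sum_{j=0}^{\tilde m-1}\psi_{j,z}$. Then there is a universal constant $C_F$ (independent of $k,n,\tilde m$) such that $$\mathbb E\max_{z\in V_{\tilde N}}(\varphi_{N,z}-\varphi_{\tilde N,z})\le\sqrt{8k}\,C_F.$$ Furthermore, for every $\delta>0$ and all $n$ sufficiently large (depending on $\delta$ and $k$), $$\mathbb P\Big(\max_{z\in V_{\tilde N}}(\varphi_{N,z}-\varphi_{\tilde N,z})>2\delta\log N\Big)\le 2\exp\Big(-\frac{\delta^2\log^22}{2k(m-\tilde m)}n^2\Big).$$
   Context: Let $k\ge1$ be an integer, $n\ge1$, $N=2^n$, $m=\lfloor n/k\rfloor$, and $V_M=\{0,1,\dots,M-1\}^2$; $\log$ is the natural logarithm. For $j\ge0$ let $\mathcal B_j$ be the set of boxes $x+\{0,\dots,2^j-1\}^2$ with $x\in\mathbb Z^2$, and $\mathcal B_j(z)$ those containing $z$. Let $\{b_{j,B}\}$ be independent centered Gaussians with $\mathrm{Var}(b_{j,B})=2^{-2j}$. Set $\psi_{j,z}=\sum_{B\in\mathcal B_{jk}(z)}\sqrt k\,b_{jk,B}$ and $\varphi_{N,z}=\sum_{j=0}^{m-1}\psi_{j,z}$. *)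

theory Defs
  imports "HOL-Probability.Probability"
begin

definition box :: "nat \<Rightarrow> int \<times> int \<Rightarrow> (int \<times> int) set" where
  "box j x = {fst x .. fst x + 2^j - 1} \<times> {snd x .. snd x + 2^j - 1}"

definition boxes_at :: "nat \<Rightarrow> int \<times> int \<Rightarrow> (int \<times> int) set" where
  "boxes_at j z = {x. z \<in> box j x}"

definition V :: "nat \<Rightarrow> (int \<times> int) set" where
  "V M = {0..<int M} \<times> {0..<int M}"

(* psi_{j,z} = sum_{B in B_{jk}(z)} sqrt k * b_{jk,B};  b (i, x) is b_{i,B} for B = box i x *)
definition psi :: "nat \<Rightarrow> (nat \<times> (int \<times> int) \<Rightarrow> 'a \<Rightarrow> real) \<Rightarrow> nat \<Rightarrow> int \<times> int \<Rightarrow> 'a \<Rightarrow> real" where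
  "psi k b j z \<omega> = (\<Sum>x\<in>boxes_at (j * k) z. sqrt (real k) * b (j * k, x) \<omega>)"

(* sum_{j=0}^{L-1} psi_{j,z}; phi_N uses L = m = n div k, phi_{N~} uses L = m~ *)
definition phi :: "nat \<Rightarrow> (nat \<times> (int \<times> int) \<Rightarrow> 'a \<Rightarrow> real) \<Rightarrow> nat \<Rightarrow> int \<times> int \<Rightarrow> 'a \<Rightarrow> real" where
  "phi k b L z \<omega> = (\<Sum>j<L. psi k b j z \<omega>)"

definition gaussian_family :: "'a measure \<Rightarrow> (nat \<times> (int \<times> int) \<Rightarrow> 'a \<Rightarrow> real) \<Rightarrow> bool" where
  "gaussian_family M b \<longleftrightarrow> prob_space M \<and>
     prob_space.indep_vars M (\<lambda>_. borel) b UNIV \<and>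
     (\<forall>j x. distributed M lborel (b (j, x)) (normal_density 0 ((1/2) ^ j)))"

definition maxdiff :: "nat \<Rightarrow> (nat \<times> (int \<times> int) \<Rightarrow> 'a \<Rightarrow> real) \<Rightarrow> nat \<Rightarrow> nat \<Rightarrow> 'a \<Rightarrow> real" where
  "maxdiff k b n mt \<omega> =
     Max ((\<lambda>z. phi k b (n div k) z \<omega> - phi k b mt z \<omega>) ` V (2 ^ (k * mt)))"

end

theory Submission
  imports Defs
begin


definition lin :: "(nat \<times> (int \<times> int) \<Rightarrow> 'a \<Rightarrow> real) \<Rightarrow> (nat \<times> (int \<times> int)) set \<Rightarrow> (nat \<times> (int \<times> int) \<Rightarrow> real) \<Rightarrow> 'a \<Rightarrow> real" where
  "lin b S c \<omega> = (\<Sum>p\<in>S. c p * b p \<omega>)"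

definition vr :: "(nat \<times> (int \<times> int)) set \<Rightarrow> (nat \<times> (int \<times> int) \<Rightarrow> real) \<Rightarrow> real" where
  "vr S c = (\<Sum>p\<in>S. (c p)\<^sup>2 * (1/4) ^ fst p)"

lemma normal_mgf:
  assumes "0 < \<sigma>"
  shows "integrable lborel (\<lambda>x. normal_density 0 \<sigma> x * exp (t * x))"
    "(\<integral>x. normal_density 0 \<sigma> x * exp (t * x) \<partial>lborel) = exp (t\<^sup>2 * \<sigma>\<^sup>2 / 2)"
proof -
  have eq: "\<And>x. normal_density 0 \<sigma> x * exp (t * x) = exp (t\<^sup>2 * \<sigma>\<^sup>2 / 2) * normal_density (t * \<sigma>\<^sup>2) \<sigma> x"
  proof -
    fix x
    have "-(x - 0)\<^sup>2 / (2 * \<sigma>\<^sup>2) + t * x = t\<^sup>2 * \<sigma>\<^sup>2 / 2 + (-(x - t * \<sigma>\<^sup>2)\<^sup>2 / (2 * \<sigma>\<^sup>2))"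
      using assms by (simp add: field_simps power2_eq_square)
    then show "normal_density 0 \<sigma> x * exp (t * x) = exp (t\<^sup>2 * \<sigma>\<^sup>2 / 2) * normal_density (t * \<sigma>\<^sup>2) \<sigma> x"
      unfolding normal_density_def by (simp add: exp_add[symmetric] mult_ac)
  qed
  show "integrable lborel (\<lambda>x. normal_density 0 \<sigma> x * exp (t * x))"
    unfolding eq using integrable_normal_density[OF assms] by simp
  show "(\<integral>x. normal_density 0 \<sigma> x * exp (t * x) \<partial>lborel) = exp (t\<^sup>2 * \<sigma>\<^sup>2 / 2)"
    unfolding eq using integral_normal_density[OF assms] by simp
qed

lemma gf_prob: "gaussian_family M b \<Longrightarrow> prob_space M"
  by (simp add: gaussian_family_def)

lemma gf_meas[measurable]: "gaussian_family M b \<Longrightarrow> b p \<in> borel_measurable M"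
  unfolding gaussian_family_def
  by (metis distributed_measurable measurable_lborel1 prod.collapse)

lemma gf_single:
  assumes "gaussian_family M b"
  shows "integrable M (\<lambda>\<omega>. exp (t * b p \<omega>))"
    "(\<integral>\<omega>. exp (t * b p \<omega>) \<partial>M) = exp (t\<^sup>2 * (1/4) ^ fst p / 2)"
proof -
  obtain j x where p: "p = (j, x)" by (cases p)
  have d: "distributed M lborel (b p) (normal_density 0 ((1/2) ^ j))"
    using assms unfolding gaussian_family_def p by blast
  have s: "((1/2::real) ^ j)\<^sup>2 = (1/4) ^ j"
    by (simp only: power2_eq_square power_mult_distrib[symmetric]) simp
  show "integrable M (\<lambda>\<omega>. exp (t * b p \<omega>))"
    using distributed_integrable[OF d, of "\<lambda>x. exp (t * x)"] normal_mgf(1)[of "(1/2)^j" t] by simp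
  show "(\<integral>\<omega>. exp (t * b p \<omega>) \<partial>M) = exp (t\<^sup>2 * (1/4) ^ fst p / 2)"
    using distributed_integral[OF d, of "\<lambda>x. exp (t * x)"] normal_mgf(2)[of "(1/2)^j" t] s p by simp
qed

lemma gf_mgf:
  assumes g: "gaussian_family M b" and S: "finite S"
  shows "integrable M (\<lambda>\<omega>. exp (lin b S c \<omega>))"
    "(\<integral>\<omega>. exp (lin b S c \<omega>) \<partial>M) = exp (vr S c / 2)"
proof -
  interpret prob_space M using g by (rule gf_prob)
  have ind0: "indep_vars (\<lambda>_. borel) b UNIV" using g by (simp add: gaussian_family_def)
  have ind1: "indep_vars (\<lambda>_. borel) (\<lambda>p. (\<lambda>x. exp (c p * x)) \<circ> b p) UNIV"
    by (rule indep_vars_compose[OF ind0]) auto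
  have ind: "indep_vars (\<lambda>_. borel) (\<lambda>p \<omega>. exp (c p * b p \<omega>)) S"
    using indep_vars_subset[OF ind1, of S] by (simp add: comp_def)
  have eq: "\<And>\<omega>. exp (lin b S c \<omega>) = (\<Prod>p\<in>S. exp (c p * b p \<omega>))"
    unfolding lin_def using S by (simp add: exp_sum)
  have ii: "\<And>p. p \<in> S \<Longrightarrow> integrable M (\<lambda>\<omega>. exp (c p * b p \<omega>))"
    using gf_single(1)[OF g] by blast
  show "integrable M (\<lambda>\<omega>. exp (lin b S c \<omega>))"
    unfolding eq by (rule indep_vars_integrable[OF S ind ii])
  have "(\<integral>\<omega>. exp (lin b S c \<omega>) \<partial>M) = (\<Prod>p\<in>S. \<integral>\<omega>. exp (c p * b p \<omega>) \<partial>M)"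
    unfolding eq by (rule indep_vars_lebesgue_integral[OF S ind ii])
  also have "\<dots> = (\<Prod>p\<in>S. exp ((c p)\<^sup>2 * (1/4) ^ fst p / 2))"
    using gf_single(2)[OF g] by simp
  also have "\<dots> = exp (vr S c / 2)"
    unfolding vr_def using S by (simp add: exp_sum sum_divide_distrib)
  finally show "(\<integral>\<omega>. exp (lin b S c \<omega>) \<partial>M) = exp (vr S c / 2)" .
qed

lemma lin_meas: "gaussian_family M b \<Longrightarrow> lin b S c \<in> borel_measurable M"
  unfolding lin_def[abs_def] using gf_meas[of M b] by measurable

lemma lin_scale: "lin b S (\<lambda>p. t * c p) \<omega> = t * lin b S c \<omega>"
  unfolding lin_def by (simp add: sum_distrib_left mult_ac)

lemma vr_scale: "vr S (\<lambda>p. t * c p) = t\<^sup>2 * vr S c"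
  unfolding vr_def by (simp add: sum_distrib_left mult_ac power_mult_distrib)

lemma vr_nonneg: "0 \<le> vr S c"
  unfolding vr_def by (intro sum_nonneg) simp

lemma chernoff:
  assumes g: "gaussian_family M b" and S: "finite S" and v: "vr S c \<le> v" "0 < v" and a: "0 \<le> a"
  shows "measure M {\<omega> \<in> space M. a < lin b S c \<omega>} \<le> exp (- a\<^sup>2 / (2 * v))"
proof -
  interpret prob_space M using g by (rule gf_prob)
  define t where "t = a / v"
  have t: "0 \<le> t" unfolding t_def using a v by simp
  let ?Y = "\<lambda>\<omega>. exp (lin b S (\<lambda>p. t * c p) \<omega>)"
  have meas: "lin b S c \<in> borel_measurable M" by (rule lin_meas[OF g])
  have "{\<omega> \<in> space M. a < lin b S c \<omega>} \<subseteq> {\<omega> \<in> space M. ?Y \<omega> \<ge> exp (t * a)}"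
    using t by (auto simp: lin_scale intro: mult_left_mono)
  hence "measure M {\<omega> \<in> space M. a < lin b S c \<omega>} \<le> measure M {\<omega> \<in> space M. ?Y \<omega> \<ge> exp (t * a)}"
    using meas by (intro finite_measure_mono) (auto simp: lin_scale)
  also have "\<dots> \<le> (\<integral>\<omega>. ?Y \<omega> \<partial>M) / exp (t * a)"
    by (rule integral_Markov_inequality_measure[where A="space M"]) (auto intro: gf_mgf[OF g S])
  also have "\<dots> = exp (vr S (\<lambda>p. t * c p) / 2) / exp (t * a)"
    by (simp add: gf_mgf[OF g S])
  also have "\<dots> = exp (t\<^sup>2 * vr S c / 2 - t * a)"
    by (simp add: vr_scale exp_diff)
  also have "\<dots> \<le> exp (t\<^sup>2 * v / 2 - t * a)"
    using v by (auto intro: mult_left_mono)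
  also have "t\<^sup>2 * v / 2 - t * a = - a\<^sup>2 / (2 * v)"
    unfolding t_def using v by (simp add: field_simps power2_eq_square)
  finally show ?thesis .
qed

lemma lin_integrable:
  assumes g: "gaussian_family M b" and S: "finite S"
  shows "integrable M (lin b S c)"
proof (rule Bochner_Integration.integrable_bound)
  show "integrable M (\<lambda>\<omega>. exp (lin b S c \<omega>) + exp (lin b S (\<lambda>p. (-1) * c p) \<omega>))"
    using gf_mgf(1)[OF g S] by auto
  show "lin b S c \<in> borel_measurable M" by (rule lin_meas[OF g])
  show "AE x in M. norm (lin b S c x) \<le> norm (exp (lin b S c x) + exp (lin b S (\<lambda>p. (-1) * c p) x))"
  proof (rule AE_I2)
    fix x
    have a: "\<bar>y\<bar> \<le> exp y + exp (- y)" for y :: real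
      using exp_ge_add_one_self[of y] exp_ge_add_one_self[of "-y"] exp_gt_zero[of y] exp_gt_zero[of "-y"]
      unfolding abs_le_iff by linarith
    show "norm (lin b S c x) \<le> norm (exp (lin b S c x) + exp (lin b S (\<lambda>p. (-1) * c p) x))"
      using a[of "lin b S c x"] lin_scale[of b S "-1" c x] by simp
  qed
qed

lemma integrable_Max:
  fixes f :: "'i \<Rightarrow> 'a \<Rightarrow> real"
  assumes "finite A" "A \<noteq> {}" "\<And>a. a \<in> A \<Longrightarrow> integrable M (f a)"
  shows "integrable M (\<lambda>\<omega>. Max ((\<lambda>a. f a \<omega>) ` A))"
  using assms
proof (induction A rule: finite_ne_induct)
  case (singleton x)
  then show ?case by simp
next
  case (insert x F)
  have "(\<lambda>\<omega>. Max ((\<lambda>a. f a \<omega>) ` insert x F)) = (\<lambda>\<omega>. max (f x \<omega>) (Max ((\<lambda>a. f a \<omega>) ` F)))"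
    using insert by (simp add: Max_insert)
  then show ?case using insert by (simp add: integrable_max)
qed

lemma emax:
  assumes g: "gaussian_family M b" and S: "finite S" and A: "finite A" "A \<noteq> {}"
    and v: "\<And>a. a \<in> A \<Longrightarrow> vr S (c a) \<le> v" and l: "0 < l"
  shows "integrable M (\<lambda>\<omega>. Max ((\<lambda>a. lin b S (c a) \<omega>) ` A))"
    "(\<integral>\<omega>. Max ((\<lambda>a. lin b S (c a) \<omega>) ` A) \<partial>M) \<le> ln (real (card A)) / l + l * v / 2"
proof -
  interpret prob_space M using g by (rule gf_prob)
  show int: "integrable M (\<lambda>\<omega>. Max ((\<lambda>a. lin b S (c a) \<omega>) ` A))"
    by (rule integrable_Max[OF A]) (rule lin_integrable[OF g S])
  define c0 where "c0 = real (card A) * exp (l\<^sup>2 * v / 2)"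
  have cA: "0 < real (card A)" using A by (simp add: card_gt_0_iff)
  have c0: "0 < c0" unfolding c0_def using cA by simp
  define Y where "Y \<omega> = (\<Sum>a\<in>A. exp (lin b S (\<lambda>p. l * c a p) \<omega>))" for \<omega>
  have Yint: "integrable M Y" unfolding Y_def using gf_mgf(1)[OF g S] by auto
  have EY: "(\<integral>\<omega>. Y \<omega> \<partial>M) \<le> c0"
  proof -
    have "(\<integral>\<omega>. Y \<omega> \<partial>M) = (\<Sum>a\<in>A. exp (vr S (\<lambda>p. l * c a p) / 2))"
      unfolding Y_def using gf_mgf[OF g S] by (simp add: Bochner_Integration.integral_sum)
    also have "\<dots> \<le> (\<Sum>a\<in>A. exp (l\<^sup>2 * v / 2))"
      using v by (intro sum_mono) (auto simp: vr_scale intro: mult_left_mono)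
    also have "\<dots> = c0" unfolding c0_def by simp
    finally show ?thesis .
  qed
  have pw: "Max ((\<lambda>a. lin b S (c a) \<omega>) ` A) \<le> (Y \<omega> / c0 + ln c0 - 1) / l" for \<omega>
  proof -
    have "Max ((\<lambda>a. lin b S (c a) \<omega>) ` A) \<in> (\<lambda>a. lin b S (c a) \<omega>) ` A"
      using A by (intro Max_in) auto
    then obtain a0 where a0: "a0 \<in> A" "Max ((\<lambda>a. lin b S (c a) \<omega>) ` A) = lin b S (c a0) \<omega>"
      by auto
    have "exp (l * lin b S (c a0) \<omega>) \<le> Y \<omega>"
      unfolding Y_def lin_scale using a0 A
      by (intro member_le_sum[where f="\<lambda>a. exp (l * lin b S (c a) \<omega>)"]) auto
    hence Ypos: "0 < Y \<omega>" by (metis exp_gt_zero less_le_trans)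
    have "l * lin b S (c a0) \<omega> \<le> ln (Y \<omega>)"
      using \<open>exp (l * lin b S (c a0) \<omega>) \<le> Y \<omega>\<close> Ypos by (metis ln_exp ln_le_cancel_iff exp_gt_zero)
    also have "ln (Y \<omega>) = ln (Y \<omega> / c0) + ln c0" using Ypos c0 by (simp add: ln_div)
    also have "\<dots> \<le> Y \<omega> / c0 - 1 + ln c0" using ln_le_minus_one[of "Y \<omega> / c0"] Ypos c0 by simp
    finally show ?thesis using a0 l by (simp add: field_simps)
  qed
  have "(\<integral>\<omega>. Max ((\<lambda>a. lin b S (c a) \<omega>) ` A) \<partial>M) \<le> (\<integral>\<omega>. (Y \<omega> / c0 + ln c0 - 1) / l \<partial>M)"
    using int Yint pw by (intro integral_mono) auto
  also have "\<dots> = ((\<integral>\<omega>. Y \<omega> \<partial>M) / c0 + ln c0 - 1) / l"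
    using Yint by (simp add: prob_space)
  also have "\<dots> \<le> (c0 / c0 + ln c0 - 1) / l"
    using EY c0 l by (intro divide_right_mono add_right_mono diff_right_mono divide_right_mono) auto
  also have "\<dots> = ln (real (card A)) / l + l * v / 2"
    using c0 cA l unfolding c0_def by (simp add: ln_mult field_simps power2_eq_square)
  finally show "(\<integral>\<omega>. Max ((\<lambda>a. lin b S (c a) \<omega>) ` A) \<partial>M) \<le> ln (real (card A)) / l + l * v / 2" .
qed



definition I :: "nat \<Rightarrow> int \<Rightarrow> int set" where
  "I i a = {a - 2^i + 1 .. a}"

lemma box_mem: "z \<in> box i x \<longleftrightarrow> fst x \<in> I i (fst z) \<and> snd x \<in> I i (snd z)"
  unfolding box_def I_def by (cases z; cases x) auto

lemma boxes_at_eq: "boxes_at i z = I i (fst z) \<times> I i (snd z)"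
  unfolding boxes_at_def using box_mem by auto

lemma finite_I[simp]: "finite (I i a)" unfolding I_def by simp

lemma card_I: "card (I i a) = 2 ^ i"
  unfolding I_def by (simp add: nat_power_eq)

lemma card_I_diff: "real (card (I i a - I i c)) \<le> \<bar>real_of_int (a - c)\<bar>"
proof (cases "c \<le> a")
  case True
  have "I i a - I i c \<subseteq> {c + 1 .. a}" using True unfolding I_def by auto
  hence "card (I i a - I i c) \<le> card {c + 1 .. a}" by (intro card_mono) auto
  also have "\<dots> = nat (a - c)" by simp
  finally show ?thesis using True by linarith
next
  case False
  have "I i a - I i c \<subseteq> {a - 2^i + 1 .. c - 2^i}" using False unfolding I_def by auto
  hence "card (I i a - I i c) \<le> card {a - 2^i + 1 .. c - 2^i}" by (intro card_mono) auto
  also have "\<dots> = nat (c - a)" by simp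
  finally show ?thesis using False by linarith
qed

lemma card_I_symdiff:
  "real (card ((I i a - I i c) \<union> (I i c - I i a))) \<le> 2 * \<bar>real_of_int (a - c)\<bar>"
proof -
  have h1: "real (card ((I i a - I i c) \<union> (I i c - I i a))) \<le> real (card (I i a - I i c)) + real (card (I i c - I i a))"
    using card_Un_le by (metis of_nat_add of_nat_le_iff)
  have h2: "real (card (I i a - I i c)) \<le> \<bar>real_of_int (a - c)\<bar>" by (rule card_I_diff)
  have h3: "real (card (I i c - I i a)) \<le> \<bar>real_of_int (c - a)\<bar>" by (rule card_I_diff)
  have h4: "\<bar>real_of_int (c - a)\<bar> = \<bar>real_of_int (a - c)\<bar>" by linarith
  show ?thesis using h1 add_mono[OF h2 h3[unfolded h4]] by simp
qed

lemma card_symdiff: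
  "real (card {x. (z \<in> box i x) \<noteq> (w \<in> box i x)})
     \<le> 4 * 2^i * (\<bar>real_of_int (fst z - fst w)\<bar> + \<bar>real_of_int (snd z - snd w)\<bar>)"
proof -
  define A1 where "A1 = I i (fst z)"
  define A2 where "A2 = I i (snd z)"
  define B1 where "B1 = I i (fst w)"
  define B2 where "B2 = I i (snd w)"
  have sub: "{x. (z \<in> box i x) \<noteq> (w \<in> box i x)} \<subseteq>
     (((A1 - B1) \<union> (B1 - A1)) \<times> (A2 \<union> B2)) \<union> ((A1 \<union> B1) \<times> ((A2 - B2) \<union> (B2 - A2)))"
    unfolding A1_def A2_def B1_def B2_def box_mem by auto
  have fin: "finite ((((A1 - B1) \<union> (B1 - A1)) \<times> (A2 \<union> B2)) \<union> ((A1 \<union> B1) \<times> ((A2 - B2) \<union> (B2 - A2))))"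
    unfolding A1_def A2_def B1_def B2_def by simp
  have c1: "real (card ((A1 - B1) \<union> (B1 - A1))) \<le> 2 * \<bar>real_of_int (fst z - fst w)\<bar>"
    unfolding A1_def B1_def by (rule card_I_symdiff)
  have c2: "real (card ((A2 - B2) \<union> (B2 - A2))) \<le> 2 * \<bar>real_of_int (snd z - snd w)\<bar>"
    unfolding A2_def B2_def by (rule card_I_symdiff)
  have u1: "real (card (A1 \<union> B1)) \<le> 2 * 2^i"
  proof -
    have "card (A1 \<union> B1) \<le> card A1 + card B1" by (rule card_Un_le)
    hence "real (card (A1 \<union> B1)) \<le> real (card A1 + card B1)" by (rule of_nat_mono)
    thus ?thesis unfolding A1_def B1_def card_I by simp
  qed
  have u2: "real (card (A2 \<union> B2)) \<le> 2 * 2^i"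
  proof -
    have "card (A2 \<union> B2) \<le> card A2 + card B2" by (rule card_Un_le)
    hence "real (card (A2 \<union> B2)) \<le> real (card A2 + card B2)" by (rule of_nat_mono)
    thus ?thesis unfolding A2_def B2_def card_I by simp
  qed
  let ?X = "((A1 - B1) \<union> (B1 - A1)) \<times> (A2 \<union> B2)"
  let ?Y = "(A1 \<union> B1) \<times> ((A2 - B2) \<union> (B2 - A2))"
  have "card {x. (z \<in> box i x) \<noteq> (w \<in> box i x)} \<le> card (?X \<union> ?Y)"
    by (rule card_mono[OF fin sub])
  also have "\<dots> \<le> card ?X + card ?Y" by (rule card_Un_le)
  finally have "real (card {x. (z \<in> box i x) \<noteq> (w \<in> box i x)}) \<le> real (card ?X + card ?Y)"
    by (rule of_nat_mono)
  hence "real (card {x. (z \<in> box i x) \<noteq> (w \<in> box i x)}) \<le> real (card ?X) + real (card ?Y)" by simp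
  also have "\<dots> = real (card ((A1 - B1) \<union> (B1 - A1))) * real (card (A2 \<union> B2)) + real (card (A1 \<union> B1)) * real (card ((A2 - B2) \<union> (B2 - A2)))"
    by (simp add: card_cartesian_product)
  also have "\<dots> \<le> (2 * \<bar>real_of_int (fst z - fst w)\<bar>) * (2 * 2^i) + (2 * 2^i) * (2 * \<bar>real_of_int (snd z - snd w)\<bar>)"
    by (intro add_mono mult_mono c1 c2 u1 u2) auto
  finally show ?thesis by (simp add: algebra_simps)
qed

definition Q :: "int \<Rightarrow> (int \<times> int) set" where
  "Q R = {-R..R} \<times> {-R..R}"

definition SS :: "nat \<Rightarrow> nat \<Rightarrow> nat \<Rightarrow> int \<Rightarrow> (nat \<times> (int \<times> int)) set" where
  "SS k mt m R = (\<lambda>(j, x). (j * k, x)) ` ({mt..<m} \<times> Q R)"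

definition cz :: "nat \<Rightarrow> int \<times> int \<Rightarrow> nat \<times> (int \<times> int) \<Rightarrow> real" where
  "cz k z p = (if z \<in> box (fst p) (snd p) then sqrt (real k) else 0)"

lemma finite_Q[simp]: "finite (Q R)" unfolding Q_def by simp

lemma finite_SS[simp]: "finite (SS k mt m R)" unfolding SS_def by simp

lemma inj_SS:
  fixes k :: nat
  assumes "1 \<le> k" shows "inj_on (\<lambda>(j, x). (j * k, x)) A"
proof -
  have k0: "k \<noteq> 0" using assms by simp
  show ?thesis using k0 by (auto simp: inj_on_def)
qed

lemma sum_SS: "1 \<le> k \<Longrightarrow> (\<Sum>p\<in>SS k mt m R. f p) = (\<Sum>j\<in>{mt..<m}. \<Sum>x\<in>Q R. f (j * k, x))"
  unfolding SS_def by (subst sum.reindex[OF inj_SS]) (auto simp: sum.cartesian_product case_prod_unfold)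

lemma boxes_sub_Q:
  assumes "0 \<le> fst z" "fst z \<le> R" "0 \<le> snd z" "snd z \<le> R" "2 ^ i \<le> R"
  shows "boxes_at i z \<subseteq> Q R"
  using assms unfolding boxes_at_eq Q_def I_def by auto

lemma psi_eq:
  assumes "boxes_at (j * k) z \<subseteq> Q R"
  shows "psi k b j z \<omega> = (\<Sum>x\<in>Q R. cz k z (j * k, x) * b (j * k, x) \<omega>)"
proof -
  have "(\<Sum>x\<in>Q R. cz k z (j * k, x) * b (j * k, x) \<omega>) =
        (\<Sum>x\<in>Q R. if z \<in> box (j * k) x then sqrt (real k) * b (j * k, x) \<omega> else 0)"
    unfolding cz_def by (intro sum.cong) auto
  also have "\<dots> = (\<Sum>x\<in>{x \<in> Q R. z \<in> box (j * k) x}. sqrt (real k) * b (j * k, x) \<omega>)"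
    by (simp add: sum.inter_filter)
  also have "{x \<in> Q R. z \<in> box (j * k) x} = boxes_at (j * k) z"
    using assms unfolding boxes_at_def by auto
  finally show ?thesis unfolding psi_def by simp
qed

lemma field_eq:
  assumes k: "1 \<le> k" and mm: "mt \<le> m" and z: "z \<in> V (2 ^ (k * mt))"
  and R: "R = 2 ^ (m * k) + 2 ^ (k * mt)"
  shows "phi k b m z \<omega> - phi k b mt z \<omega> = lin b (SS k mt m R) (cz k z) \<omega>"
proof -
  have "phi k b m z \<omega> = phi k b mt z \<omega> + (\<Sum>j\<in>{mt..<m}. psi k b j z \<omega>)"
    unfolding phi_def lessThan_atLeast0 using sum.atLeastLessThan_concat[of 0 mt m, symmetric] mm by simp
  moreover have "psi k b j z \<omega> = (\<Sum>x\<in>Q R. cz k z (j * k, x) * b (j * k, x) \<omega>)" if j: "j \<in> {mt..<m}" for j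
  proof (rule psi_eq, rule boxes_sub_Q)
    have T: "(2::int) ^ (k * mt) \<le> R" using R by simp
    have jm: "j * k \<le> m * k" using j by simp
    have "(2::int) ^ (j * k) \<le> 2 ^ (m * k)" by (rule power_increasing[OF jm]) simp
    moreover have "(0::int) \<le> 2 ^ (k * mt)" by simp
    ultimately show "2 ^ (j * k) \<le> R" using R by linarith
    show "0 \<le> fst z" "fst z \<le> R" "0 \<le> snd z" "snd z \<le> R"
      using z T unfolding V_def by auto
  qed
  ultimately show ?thesis unfolding lin_def using sum_SS[OF k, of "\<lambda>p. cz k z p * b p \<omega>"] by simp
qed

lemma geom_bound:
  assumes "1 \<le> k"
  shows "(\<Sum>j\<in>{mt..<m}. (1/2::real) ^ (j * k)) \<le> 2 * (1/2) ^ (k * mt)"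
proof (cases "mt \<le> m")
  case True
  have "(\<Sum>j\<in>{mt..<m}. (1/2::real) ^ (j * k)) \<le> (\<Sum>j\<in>{mt..<m}. (1/2) ^ (k * mt) * (1/2) ^ (j - mt))"
  proof (intro sum_mono)
    fix j assume j: "j \<in> {mt..<m}"
    have "(1/2::real) ^ (j * k) = (1/2) ^ (k * mt) * (1/2) ^ ((j - mt) * k)"
      using j by (simp add: power_add[symmetric] algebra_simps diff_mult_distrib)
    also have "\<dots> \<le> (1/2) ^ (k * mt) * (1/2) ^ (j - mt)"
      using assms by (intro mult_left_mono power_decreasing) auto
    finally show "(1/2::real) ^ (j * k) \<le> (1/2) ^ (k * mt) * (1/2) ^ (j - mt)" .
  qed
  also have "\<dots> = (1/2) ^ (k * mt) * (\<Sum>i\<in>{0..<m - mt}. (1/2) ^ i)"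
  proof -
    have "(\<Sum>j\<in>{mt..<m}. (1/2::real) ^ (j - mt)) = (\<Sum>i\<in>{0..<m - mt}. (1/2) ^ i)"
      using sum.shift_bounds_nat_ivl[of "\<lambda>j. (1/2::real) ^ (j - mt)" 0 mt "m - mt"] True by simp
    moreover have "(\<Sum>j\<in>{mt..<m}. (1/2::real) ^ (k * mt) * (1/2) ^ (j - mt)) = (1/2) ^ (k * mt) * (\<Sum>j\<in>{mt..<m}. (1/2::real) ^ (j - mt))"
      by (simp add: sum_distrib_left)
    ultimately show ?thesis by simp
  qed
  also have "\<dots> \<le> (1/2) ^ (k * mt) * 2"
  proof -
    have "(\<Sum>i\<in>{0..<m - mt}. (1/2::real) ^ i) \<le> (\<Sum>i. (1/2) ^ i)"
      by (intro sum_le_suminf summable_geometric) auto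
    also have "\<dots> = 2" using suminf_geometric[of "1/2::real"] by simp
    finally show ?thesis by (intro mult_left_mono) auto
  qed
  finally show ?thesis by simp
next
  case False
  then show ?thesis by simp
qed

lemma vr_SS: "1 \<le> k \<Longrightarrow> vr (SS k mt m R) c = (\<Sum>j\<in>{mt..<m}. \<Sum>x\<in>Q R. (c (j * k, x))\<^sup>2 * (1/4) ^ (j * k))"
  unfolding vr_def by (simp add: sum_SS)

lemma finite_symdiff: "finite {x. (z \<in> box i x) \<noteq> (w \<in> box i x)}"
proof (rule finite_subset)
  show "{x. (z \<in> box i x) \<noteq> (w \<in> box i x)} \<subseteq> boxes_at i z \<union> boxes_at i w"
    unfolding boxes_at_def by auto
  show "finite (boxes_at i z \<union> boxes_at i w)" unfolding boxes_at_eq by simp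
qed

lemma vr_diff:
  assumes k: "1 \<le> k" and D: "\<bar>real_of_int (fst z - fst w)\<bar> \<le> D" "\<bar>real_of_int (snd z - snd w)\<bar> \<le> D"
  shows "vr (SS k mt m R) (\<lambda>p. cz k z p - cz k w p) \<le> 16 * real k * D * (1/2) ^ (k * mt)"
proof -
  have D0: "0 \<le> D" using D by linarith
  have inner: "(\<Sum>x\<in>Q R. (cz k z (j * k, x) - cz k w (j * k, x))\<^sup>2 * (1/4) ^ (j * k))
      \<le> 8 * real k * D * (1/2) ^ (j * k)" for j
  proof -
    let ?P = "\<lambda>x. (z \<in> box (j * k) x) \<noteq> (w \<in> box (j * k) x)"
    have "(\<Sum>x\<in>Q R. (cz k z (j * k, x) - cz k w (j * k, x))\<^sup>2 * (1/4) ^ (j * k))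
        = (\<Sum>x\<in>Q R. if ?P x then real k * (1/4) ^ (j * k) else 0)"
      unfolding cz_def by (intro sum.cong) auto
    also have "\<dots> = real (card {x \<in> Q R. ?P x}) * (real k * (1/4) ^ (j * k))"
      by (simp add: sum.inter_filter[symmetric])
    also have "\<dots> \<le> real (card {x. ?P x}) * (real k * (1/4) ^ (j * k))"
    proof -
      have "card {x \<in> Q R. ?P x} \<le> card {x. ?P x}" by (rule card_mono[OF finite_symdiff]) blast
      hence "real (card {x \<in> Q R. ?P x}) \<le> real (card {x. ?P x})" by (rule of_nat_mono)
      thus ?thesis by (rule mult_right_mono) simp
    qed
    also have "\<dots> \<le> (4 * 2 ^ (j * k) * (D + D)) * (real k * (1/4) ^ (j * k))"
    proof -
      have c: "real (card {x. ?P x}) \<le> 4 * 2 ^ (j * k) * (\<bar>real_of_int (fst z - fst w)\<bar> + \<bar>real_of_int (snd z - snd w)\<bar>)"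
        by (rule card_symdiff)
      have "4 * 2 ^ (j * k) * (\<bar>real_of_int (fst z - fst w)\<bar> + \<bar>real_of_int (snd z - snd w)\<bar>) \<le> 4 * 2 ^ (j * k) * (D + D)"
        by (intro mult_left_mono add_mono D) simp
      from order_trans[OF c this] show ?thesis by (rule mult_right_mono) simp
    qed
    also have "\<dots> = 8 * real k * D * (2 ^ (j * k) * (1/4) ^ (j * k))" by (simp add: algebra_simps)
    also have "(2::real) ^ (j * k) * (1/4) ^ (j * k) = (1/2) ^ (j * k)"
      by (simp add: power_mult_distrib[symmetric])
    finally show ?thesis .
  qed
  have "vr (SS k mt m R) (\<lambda>p. cz k z p - cz k w p) \<le> (\<Sum>j\<in>{mt..<m}. 8 * real k * D * (1/2) ^ (j * k))"
    unfolding vr_SS[OF k] by (intro sum_mono inner)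
  also have "\<dots> = 8 * real k * D * (\<Sum>j\<in>{mt..<m}. (1/2) ^ (j * k))" by (simp add: sum_distrib_left)
  also have "\<dots> \<le> 8 * real k * D * (2 * (1/2) ^ (k * mt))"
    using geom_bound[OF k] D0 by (intro mult_left_mono) auto
  finally show ?thesis by simp
qed

lemma vr_single:
  assumes k: "1 \<le> k" and mm: "mt \<le> m"
  shows "vr (SS k mt m R) (cz k z) \<le> real k * (real m - real mt)"
proof -
  have inner: "(\<Sum>x\<in>Q R. (cz k z (j * k, x))\<^sup>2 * (1/4) ^ (j * k)) \<le> real k" for j
  proof -
    have "(\<Sum>x\<in>Q R. (cz k z (j * k, x))\<^sup>2 * (1/4) ^ (j * k))
        = (\<Sum>x\<in>Q R. if z \<in> box (j * k) x then real k * (1/4) ^ (j * k) else 0)"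
      unfolding cz_def by (intro sum.cong) auto
    also have "\<dots> = real (card {x \<in> Q R. z \<in> box (j * k) x}) * (real k * (1/4) ^ (j * k))"
      by (simp add: sum.inter_filter[symmetric])
    also have "\<dots> \<le> real (card (boxes_at (j * k) z)) * (real k * (1/4) ^ (j * k))"
    proof -
      have "card {x \<in> Q R. z \<in> box (j * k) x} \<le> card (boxes_at (j * k) z)"
        by (rule card_mono) (simp add: boxes_at_eq, auto simp: boxes_at_def)
      hence "real (card {x \<in> Q R. z \<in> box (j * k) x}) \<le> real (card (boxes_at (j * k) z))" by (rule of_nat_mono)
      thus ?thesis by (rule mult_right_mono) simp
    qed
    also have "\<dots> = real k * (2 ^ (j * k) * 2 ^ (j * k) * (1/4) ^ (j * k))"
      by (simp add: boxes_at_eq card_cartesian_product card_I)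
    also have "(2::real) ^ (j * k) * 2 ^ (j * k) * (1/4) ^ (j * k) = 1"
      by (simp add: power_mult_distrib[symmetric])
    finally show ?thesis by simp
  qed
  have "vr (SS k mt m R) (cz k z) \<le> (\<Sum>j\<in>{mt..<m}. real k)"
    unfolding vr_SS[OF k] by (intro sum_mono inner)
  also have "\<dots> \<le> real k * (real m - real mt)"
    using mm by (simp add: of_nat_diff)
  finally show ?thesis .
qed



lemma lin_diff: "lin b S (\<lambda>p. c p - d p) \<omega> = lin b S c \<omega> - lin b S d \<omega>"
  unfolding lin_def by (simp add: sum_subtractf left_diff_distrib)

lemma V_finite[simp]: "finite (V T)" unfolding V_def by simp

lemma V_zero: "0 < T \<Longrightarrow> (0, 0) \<in> V T" unfolding V_def by simp

lemma V_ne: "0 < T \<Longrightarrow> V T \<noteq> {}" using V_zero by blast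

lemma card_V: "card (V T) = T * T" unfolding V_def by (simp add: card_cartesian_product)

lemma maxdiff_eq:
  assumes k: "1 \<le> k" and mm: "mt \<le> n div k"
  shows "maxdiff k b n mt \<omega> = Max ((\<lambda>z. lin b (SS k mt (n div k) (2 ^ (n div k * k) + 2 ^ (k * mt))) (cz k z) \<omega>) ` V (2 ^ (k * mt)))"
  unfolding maxdiff_def using field_eq[OF k mm _ refl] by (intro arg_cong[where f=Max] image_cong) auto

lemma aux_eq:
  fixes d L n kk c :: real
  assumes "0 < kk * c"
  shows "d\<^sup>2 * L\<^sup>2 / (2 * kk * c) * n\<^sup>2 = (2 * d * (n * L))\<^sup>2 / (8 * (kk * c))"
proof -
  define a where "a = kk * c"
  have a: "0 < a" using assms a_def by simp
  have "d\<^sup>2 * L\<^sup>2 / (2 * a) * n\<^sup>2 = (2 * d * (n * L))\<^sup>2 / (8 * a)"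
    using a by (simp add: field_simps power2_eq_square)
  thus ?thesis unfolding a_def by (simp add: mult.assoc)
qed

lemma part2:
  fixes M :: "'a measure"
  assumes g: "gaussian_family M b" and k: "1 \<le> k" and mt: "1 \<le> mt" and mtm: "mt < n div k"
    and d: "0 < \<delta>" and nbig: "86 * real k \<le> \<delta>\<^sup>2 * ln 2 * real n"
  shows "measure M {\<omega> \<in> space M. maxdiff k b n mt \<omega> > 2 * \<delta> * ln (2 ^ n)}
          \<le> 2 * exp (- (\<delta>\<^sup>2 * (ln 2)\<^sup>2 / (2 * real k * (real (n div k) - real mt))) * (real n)\<^sup>2)"
proof -
  interpret prob_space M using g by (rule gf_prob)
  define m where "m = n div k"
  define R :: int where "R = 2 ^ (m * k) + 2 ^ (k * mt)"
  define T :: nat where "T = 2 ^ (k * mt)"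
  define F where "F z = lin b (SS k mt m R) (cz k z)" for z
  define L where "L = ln (2::real)"
  define u where "u = 2 * \<delta> * (real n * L)"
  define s2 where "s2 = real k * (real m - real mt)"
  have L: "0 < L" unfolding L_def by simp
  have T0: "0 < T" unfolding T_def by simp
  have s2: "0 < s2" unfolding s2_def using k mtm m_def by simp
  have n0: "0 < n" using mtm by (cases n) auto
  have u0: "0 \<le> u" unfolding u_def using d L by simp
  have lnn: "ln ((2::real) ^ n) = real n * L" unfolding L_def by (simp add: ln_realpow)
  have Fmeas: "\<And>z. F z \<in> borel_measurable M" unfolding F_def by (rule lin_meas[OF g])
  have mx: "maxdiff k b n mt \<omega> = Max ((\<lambda>z. F z \<omega>) ` V T)" for \<omega>
    unfolding F_def T_def R_def m_def by (rule maxdiff_eq[OF k less_imp_le[OF mtm]])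
  have set_eq: "{\<omega> \<in> space M. maxdiff k b n mt \<omega> > 2 * \<delta> * ln (2 ^ n)} = {\<omega> \<in> space M. u < Max ((\<lambda>z. F z \<omega>) ` V T)}"
    unfolding mx lnn u_def by simp
  have rhs: "2 * exp (- (\<delta>\<^sup>2 * (ln 2)\<^sup>2 / (2 * real k * (real (n div k) - real mt))) * (real n)\<^sup>2)
      = 2 * exp (- u\<^sup>2 / (8 * s2))"
  proof -
    have s2': "0 < real k * (real (n div k) - real mt)" using s2 unfolding s2_def m_def .
    have "\<delta>\<^sup>2 * (ln 2)\<^sup>2 / (2 * real k * (real (n div k) - real mt)) * (real n)\<^sup>2 = u\<^sup>2 / (8 * s2)"
      unfolding u_def s2_def L_def m_def using s2' by (rule aux_eq)
    thus ?thesis by simp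
  qed
  have cardV: "real (card (V T)) \<le> exp (real n * (2 * L))"
  proof -
    have "k * mt \<le> n" using mtm k by (metis div_times_less_eq_dividend less_or_eq_imp_le mult.commute mult_le_mono2 order.trans)
    hence "card (V T) \<le> 4 ^ n" unfolding card_V T_def
      by (simp add: power_mult_distrib[symmetric] power_increasing)
    hence "real (card (V T)) \<le> 4 ^ n" by (metis of_nat_le_iff of_nat_numeral of_nat_power)
    also have "(4::real) ^ n = exp (real n * (2 * L))"
    proof -
      have "ln ((2::real) ^ 2) = real 2 * ln 2" by (rule ln_realpow)
      hence "2 * ln (2::real) = ln 4" by simp
      hence e: "exp (2 * ln (2::real)) = 4" by simp
      show ?thesis unfolding L_def exp_of_nat_mult e ..
    qed
    finally show ?thesis .
  qed
  have Fvar: "\<And>z. vr (SS k mt m R) (cz k z) \<le> s2" unfolding s2_def using mtm m_def by (intro vr_single[OF k]) simp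
  show ?thesis
  proof (cases "s2 \<le> 3/4 * \<delta>\<^sup>2 * real n * L")
    case True
    have "{\<omega> \<in> space M. u < Max ((\<lambda>z. F z \<omega>) ` V T)} \<subseteq> (\<Union>z\<in>V T. {\<omega> \<in> space M. u < F z \<omega>})"
      using V_ne[OF T0] by (auto simp: Max_gr_iff)
    hence "measure M {\<omega> \<in> space M. u < Max ((\<lambda>z. F z \<omega>) ` V T)} \<le> measure M (\<Union>z\<in>V T. {\<omega> \<in> space M. u < F z \<omega>})"
      using Fmeas by (intro finite_measure_mono) auto
    also have "\<dots> \<le> (\<Sum>z\<in>V T. measure M {\<omega> \<in> space M. u < F z \<omega>})"
      using Fmeas by (intro measure_UNION_le) auto
    also have "\<dots> \<le> (\<Sum>z\<in>V T. exp (- u\<^sup>2 / (2 * s2)))"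
      unfolding F_def by (intro sum_mono chernoff[OF g] Fvar[unfolded F_def] s2 u0) auto
    also have "\<dots> = real (card (V T)) * exp (- u\<^sup>2 / (2 * s2))" by simp
    also have "\<dots> \<le> exp (real n * (2 * L)) * exp (- u\<^sup>2 / (2 * s2))"
      using cardV by (intro mult_right_mono) auto
    also have "\<dots> = exp (real n * (2 * L) - u\<^sup>2 / (2 * s2))" by (simp add: exp_add[symmetric])
    also have "\<dots> \<le> exp (- u\<^sup>2 / (8 * s2))"
    proof -
      have "real n * (2 * L) * s2 \<le> real n * (2 * L) * (3/4 * \<delta>\<^sup>2 * real n * L)"
        using True L n0 by (intro mult_left_mono) auto
      also have "\<dots> = 3/8 * u\<^sup>2" unfolding u_def by (simp add: power2_eq_square)
      finally have "real n * (2 * L) * s2 \<le> 3/8 * u\<^sup>2" .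
      hence "real n * (2 * L) - u\<^sup>2 / (2 * s2) \<le> - u\<^sup>2 / (8 * s2)"
        using s2 by (simp add: field_simps)
      thus ?thesis by simp
    qed
    also have "\<dots> \<le> 2 * exp (- u\<^sup>2 / (8 * s2))" by simp
    finally show ?thesis unfolding set_eq rhs .
  next
    case False
    define Gz where "Gz z = lin b (SS k mt m R) (\<lambda>p. cz k z p - cz k (0,0) p)" for z
    have Gmeas: "\<And>z. Gz z \<in> borel_measurable M" unfolding Gz_def by (rule lin_meas[OF g])
    have Geq: "Gz z \<omega> = F z \<omega> - F (0,0) \<omega>" for z \<omega> unfolding Gz_def F_def by (rule lin_diff)
    have Gvar: "vr (SS k mt m R) (\<lambda>p. cz k z p - cz k (0,0) p) \<le> 16 * real k" if z: "z \<in> V T" for z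
    proof -
      have h: "vr (SS k mt m R) (\<lambda>p. cz k z p - cz k (0,0) p) \<le> 16 * real k * real T * (1/2) ^ (k * mt)"
        using z by (intro vr_diff[OF k]) (auto simp: V_def)
      have e: "real T * (1/2) ^ (k * mt) = 1" unfolding T_def by (simp add: power_mult_distrib[symmetric])
      have "16 * real k * real T * (1/2) ^ (k * mt) = 16 * real k" by (metis mult.assoc mult_1_right e)
      thus ?thesis using h by linarith
    qed
    have "{\<omega> \<in> space M. u < Max ((\<lambda>z. F z \<omega>) ` V T)} \<subseteq>
        {\<omega> \<in> space M. u/2 < F (0,0) \<omega>} \<union> (\<Union>z\<in>V T. {\<omega> \<in> space M. u/2 < Gz z \<omega>})"
      using V_ne[OF T0] by (auto simp: Max_gr_iff Geq)
    hence "measure M {\<omega> \<in> space M. u < Max ((\<lambda>z. F z \<omega>) ` V T)}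
        \<le> measure M ({\<omega> \<in> space M. u/2 < F (0,0) \<omega>} \<union> (\<Union>z\<in>V T. {\<omega> \<in> space M. u/2 < Gz z \<omega>}))"
      using Fmeas Gmeas by (intro finite_measure_mono) auto
    also have "\<dots> \<le> measure M {\<omega> \<in> space M. u/2 < F (0,0) \<omega>} + measure M (\<Union>z\<in>V T. {\<omega> \<in> space M. u/2 < Gz z \<omega>})"
      using Fmeas Gmeas by (intro measure_Un_le) auto
    also have "\<dots> \<le> exp (- (u/2)\<^sup>2 / (2 * s2)) + (\<Sum>z\<in>V T. measure M {\<omega> \<in> space M. u/2 < Gz z \<omega>})"
      using Gmeas u0 unfolding F_def
      by (intro add_mono measure_UNION_le chernoff[OF g] Fvar[unfolded F_def] s2) auto
    also have "(\<Sum>z\<in>V T. measure M {\<omega> \<in> space M. u/2 < Gz z \<omega>}) \<le> (\<Sum>z\<in>V T. exp (- (u/2)\<^sup>2 / (2 * (16 * real k))))"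
      unfolding Gz_def using u0 k by (intro sum_mono chernoff[OF g] Gvar) auto
    also have "\<dots> = real (card (V T)) * exp (- (u/2)\<^sup>2 / (2 * (16 * real k)))" by simp
    also have "\<dots> \<le> exp (real n * (2 * L)) * exp (- (u/2)\<^sup>2 / (2 * (16 * real k)))"
      using cardV by (intro mult_right_mono) auto
    also have "\<dots> = exp (real n * (2 * L) - (u/2)\<^sup>2 / (2 * (16 * real k)))" by (simp add: exp_add[symmetric])
    also have "\<dots> \<le> exp (- u\<^sup>2 / (8 * s2))"
    proof -
      have s2b: "3/4 * \<delta>\<^sup>2 * real n * L < s2" using False by simp
      have a: "u\<^sup>2 / (8 * s2) \<le> 2/3 * (real n * L)"
      proof -
        have "u\<^sup>2 = 16/3 * (3/4 * \<delta>\<^sup>2 * real n * L) * (real n * L)" unfolding u_def by (simp add: power2_eq_square)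
        also have "\<dots> \<le> 16/3 * s2 * (real n * L)"
          using s2b L n0 by (intro mult_right_mono mult_left_mono) auto
        finally show ?thesis using s2 by (simp add: field_simps)
      qed
      have b: "8/3 * (real n * L) \<le> (u/2)\<^sup>2 / (2 * (16 * real k))"
      proof -
        have "(u/2)\<^sup>2 / (2 * (16 * real k)) = (\<delta>\<^sup>2 * L * real n) * (real n * L) / (32 * real k)"
          unfolding u_def by (simp add: power2_eq_square)
        also have "\<dots> \<ge> (86 * real k) * (real n * L) / (32 * real k)"
          using nbig L n0 k unfolding L_def by (intro divide_right_mono mult_right_mono) auto
        finally have h: "(86 * real k) * (real n * L) / (32 * real k) \<le> (u/2)\<^sup>2 / (2 * (16 * real k))" .
        have "(86 * real k) * (real n * L) / (32 * real k) = 86/32 * (real n * L)" using k by simp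
        moreover have "0 \<le> real n * L" using L by simp
        ultimately show ?thesis using h by linarith
      qed
      have "real n * (2 * L) = 2 * (real n * L)" by simp
      hence "real n * (2 * L) - (u/2)\<^sup>2 / (2 * (16 * real k)) \<le> - u\<^sup>2 / (8 * s2)" using a b by linarith
      thus ?thesis by simp
    qed
    finally have "measure M {\<omega> \<in> space M. u < Max ((\<lambda>z. F z \<omega>) ` V T)}
       \<le> exp (- (u/2)\<^sup>2 / (2 * s2)) + exp (- u\<^sup>2 / (8 * s2))" by simp
    also have "exp (- (u/2)\<^sup>2 / (2 * s2)) = exp (- u\<^sup>2 / (8 * s2))" by (simp add: power2_eq_square)
    finally show ?thesis unfolding set_eq rhs by simp
  qed
qed



definition fl :: "nat \<Rightarrow> nat \<Rightarrow> int \<Rightarrow> int" where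
  "fl K l a = 2 ^ (K - l) * (a div 2 ^ (K - l))"

definition pjx :: "nat \<Rightarrow> nat \<Rightarrow> int \<times> int \<Rightarrow> int \<times> int" where
  "pjx K l z = (fl K l (fst z), fl K l (snd z))"

lemma fl_bounds: "a - 2 ^ (K - l) < fl K l a \<and> fl K l a \<le> a"
proof -
  define d :: int where "d = 2 ^ (K - l)"
  have d: "0 < d" unfolding d_def by simp
  have "a = d * (a div d) + a mod d" by simp
  moreover have "0 \<le> a mod d" "a mod d < d" using d by auto
  ultimately show ?thesis unfolding fl_def d_def[symmetric] by linarith
qed

lemma fl_diff:
  assumes "l < K"
  shows "\<bar>real_of_int (fl K (Suc l) a - fl K l a)\<bar> \<le> 2 ^ (K - l)"
proof -
  have "(2::int) ^ (K - Suc l) \<le> 2 ^ (K - l)" by (intro power_increasing) auto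
  hence "\<bar>fl K (Suc l) a - fl K l a\<bar> \<le> 2 ^ (K - l)"
    using fl_bounds[of a K l] fl_bounds[of a K "Suc l"] by linarith
  hence "real_of_int \<bar>fl K (Suc l) a - fl K l a\<bar> \<le> real_of_int (2 ^ (K - l))" by (rule of_int_le_iff[THEN iffD2])
  thus ?thesis by simp
qed

lemma fl_K: "fl K K a = a" unfolding fl_def by simp

lemma fl_0: "0 \<le> a \<Longrightarrow> a < 2 ^ K \<Longrightarrow> fl K 0 a = 0"
  unfolding fl_def by (simp add: div_pos_pos_trivial)

lemma fl_range:
  assumes "0 \<le> a" "a < 2 ^ K" "l \<le> K"
  shows "fl K l a \<in> (\<lambda>q. 2 ^ (K - l) * q) ` {0..<2 ^ l}"
proof -
  define d :: int where "d = 2 ^ (K - l)"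
  have d: "0 < d" unfolding d_def by simp
  have K: "(2::int) ^ K = d * 2 ^ l" unfolding d_def using assms(3) by (simp add: power_add[symmetric])
  have q0: "0 \<le> a div d" using assms d by (simp add: pos_imp_zdiv_nonneg_iff)
  have "d * (a div d) \<le> a" using fl_bounds[of a K l] unfolding fl_def d_def by simp
  hence "d * (a div d) < d * 2 ^ l" using assms K by linarith
  hence q1: "a div d < 2 ^ l" using d by simp
  show ?thesis unfolding fl_def d_def[symmetric] using q0 q1 by auto
qed

lemma card_pi_image:
  assumes "l \<le> K"
  shows "card (pjx K l ` V (2 ^ K)) \<le> 4 ^ l"
proof -
  define d :: int where "d = 2 ^ (K - l)"
  have sub: "pjx K l ` V (2 ^ K) \<subseteq> (\<lambda>(q1, q2). (d * q1, d * q2)) ` ({0..<2 ^ l} \<times> {0..<2 ^ l})"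
  proof
    fix y assume "y \<in> pjx K l ` V (2 ^ K)"
    then obtain z where z: "z \<in> V (2 ^ K)" "y = pjx K l z" by auto
    have "fl K l (fst z) \<in> (\<lambda>q. d * q) ` {0..<2 ^ l}" "fl K l (snd z) \<in> (\<lambda>q. d * q) ` {0..<2 ^ l}"
      using z assms unfolding V_def d_def by (auto intro!: fl_range)
    then show "y \<in> (\<lambda>(q1, q2). (d * q1, d * q2)) ` ({0..<2 ^ l} \<times> {0..<2 ^ l})"
      unfolding z pjx_def by force
  qed
  have "card (pjx K l ` V (2 ^ K)) \<le> card ((\<lambda>(q1, q2). (d * q1, d * q2)) ` ({0..<(2::int) ^ l} \<times> {0..<(2::int) ^ l}))"
    by (rule card_mono[OF _ sub]) simp
  also have "\<dots> \<le> card ({0..<(2::int) ^ l} \<times> {0..<(2::int) ^ l})" by (rule card_image_le) simp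
  also have "\<dots> = 4 ^ l" by (simp add: card_cartesian_product nat_power_eq power_mult_distrib[symmetric])
  finally show ?thesis .
qed

definition fF :: "nat \<Rightarrow> real" where
  "fF l = (4 * real l + 10) * (3/4) ^ l"

lemma fF_nonneg: "0 \<le> fF l" unfolding fF_def by simp

lemma summable_fF: "summable fF"
proof (rule summable_ratio_test[where c = "11/12" and N = 2])
  fix n :: nat assume n: "2 \<le> n"
  have "(4 * real (Suc n) + 10) * (3/4) \<le> 11/12 * (4 * real n + 10)" using n by simp
  hence "(4 * real (Suc n) + 10) * (3/4) * (3/4) ^ n \<le> 11/12 * (4 * real n + 10) * (3/4) ^ n"
    by (intro mult_right_mono) auto
  thus "norm (fF (Suc n)) \<le> 11/12 * norm (fF n)"
    unfolding fF_def by (simp add: mult_ac)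
qed simp

lemma gf_mean0:
  assumes g: "gaussian_family M b" and S: "finite S"
  shows "(\<integral>\<omega>. lin b S c \<omega> \<partial>M) = 0"
proof -
  interpret prob_space M using g by (rule gf_prob)
  have e: "(\<integral>\<omega>. b p \<omega> \<partial>M) = 0" for p
  proof -
    obtain j x where p: "p = (j, x)" by (cases p)
    have "distributed M lborel (b p) (normal_density 0 ((1/2) ^ j))"
      using g unfolding gaussian_family_def p by blast
    thus ?thesis using normal_distributed_expectation[of "(1/2) ^ j"] by simp
  qed
  have ib: "integrable M (b p)" for p
  proof -
    obtain j x where p: "p = (j, x)" by (cases p)
    have d: "distributed M lborel (b p) (normal_density 0 ((1/2) ^ j))"
      using g unfolding gaussian_family_def p by blast
    show ?thesis using distributed_integrable[OF d, of "\<lambda>x. x"] integrable_normal_moment_nz_1[of "(1/2) ^ j" 0] by simp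
  qed
  show ?thesis unfolding lin_def using ib e by (simp add: Bochner_Integration.integral_sum)
qed

lemma chain_alg:
  fixes s c :: real
  assumes s: "0 < s" and c: "c \<le> (2 * real l + 1) * 2"
  shows "c / ((4/3) ^ l / s) + (4/3) ^ l / s * (16 * s\<^sup>2 * (1/2) ^ l) / 2 \<le> s * fF l"
proof -
  have p: "(0::real) < (4/3) ^ l" by simp
  have e1: "c / ((4/3) ^ l / s) = c * s * (3/4) ^ l"
    using p s by (simp add: field_simps power_divide)
  have e2: "(4/3) ^ l / s * (16 * s\<^sup>2 * (1/2) ^ l) / 2 = 8 * s * ((4/3) ^ l * (1/2) ^ l)"
    using s by (simp add: field_simps power2_eq_square)
  have e3: "(4/3::real) ^ l * (1/2) ^ l = (2/3) ^ l" by (simp add: power_mult_distrib[symmetric])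
  have m: "(2/3::real) ^ l \<le> (3/4) ^ l" by (intro power_mono) auto
  have "c * s * (3/4) ^ l \<le> (2 * real l + 1) * 2 * s * (3/4) ^ l"
    using c s by (intro mult_right_mono) auto
  moreover have "8 * s * (2/3) ^ l \<le> 8 * s * (3/4) ^ l" using m s by simp
  ultimately have "c / ((4/3) ^ l / s) + (4/3) ^ l / s * (16 * s\<^sup>2 * (1/2) ^ l) / 2
      \<le> (2 * real l + 1) * 2 * s * (3/4) ^ l + 8 * s * (3/4) ^ l"
    unfolding e1 e2 e3 by linarith
  also have "\<dots> = s * fF l" unfolding fF_def by (simp add: algebra_simps)
  finally show ?thesis .
qed

lemma part1:
  fixes M :: "'a measure"
  assumes g: "gaussian_family M b" and k: "1 \<le> k" and mt: "1 \<le> mt" and mtm: "mt < n div k"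
  shows "integrable M (maxdiff k b n mt) \<and> (\<integral>\<omega>. maxdiff k b n mt \<omega> \<partial>M) \<le> sqrt (real k) * suminf fF"
proof -
  interpret prob_space M using g by (rule gf_prob)
  define m where "m = n div k"
  define R :: int where "R = 2 ^ (m * k) + 2 ^ (k * mt)"
  define K where "K = k * mt"
  define S where "S = SS k mt m R"
  define F where "F z = lin b S (cz k z)" for z
  define P where "P l = (\<lambda>z. (pjx K (Suc l) z, pjx K l z)) ` V (2 ^ K)" for l
  define cD where "cD a = (\<lambda>p. cz k (fst a) p - cz k (snd a) p)" for a :: "(int \<times> int) \<times> (int \<times> int)"
  define MP where "MP l \<omega> = Max ((\<lambda>a. lin b S (cD a) \<omega>) ` P l)" for l \<omega>
  have Sfin: "finite S" unfolding S_def by simp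
  have Vne: "V (2 ^ K) \<noteq> {}" by (rule V_ne) simp
  have mx: "maxdiff k b n mt \<omega> = Max ((\<lambda>z. F z \<omega>) ` V (2 ^ K))" for \<omega>
    unfolding F_def S_def R_def m_def K_def by (rule maxdiff_eq[OF k less_imp_le[OF mtm]])
  have mx': "maxdiff k b n mt = (\<lambda>\<omega>. Max ((\<lambda>z. F z \<omega>) ` V (2 ^ K)))" using mx by auto
  have intF: "integrable M (F z)" for z unfolding F_def by (rule lin_integrable[OF g Sfin])
  have int_md: "integrable M (maxdiff k b n mt)"
    unfolding mx' by (rule integrable_Max[OF V_finite Vne intF])
  have Pfin: "finite (P l)" for l unfolding P_def by simp
  have Pne: "P l \<noteq> {}" for l unfolding P_def using Vne by simp
  have EMP: "integrable M (MP l) \<and> (\<integral>\<omega>. MP l \<omega> \<partial>M) \<le> sqrt (real k) * fF l" if l: "l < K" for l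
  proof -
    have cardP: "real (card (P l)) \<le> 4 ^ (2 * l + 1)"
    proof -
      have "P l \<subseteq> pjx K (Suc l) ` V (2 ^ K) \<times> pjx K l ` V (2 ^ K)" unfolding P_def by auto
      hence "card (P l) \<le> card (pjx K (Suc l) ` V (2 ^ K) \<times> pjx K l ` V (2 ^ K))"
        by (intro card_mono) auto
      also have "\<dots> = card (pjx K (Suc l) ` V (2 ^ K)) * card (pjx K l ` V (2 ^ K))"
        by (rule card_cartesian_product)
      also have "\<dots> \<le> 4 ^ Suc l * 4 ^ l"
        using l by (intro mult_le_mono card_pi_image) auto
      also have "\<dots> = 4 ^ (2 * l + 1)" by (simp add: power_add[symmetric])
      finally have "card (P l) \<le> 4 ^ (2 * l + 1)" .
      hence "real (card (P l)) \<le> real (4 ^ (2 * l + 1))" by (rule of_nat_mono)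
      thus ?thesis by simp
    qed
    have cpos: "0 < real (card (P l))" using Pfin Pne by (simp add: card_gt_0_iff)
    have lncard: "ln (real (card (P l))) \<le> (2 * real l + 1) * 2"
    proof -
      have "ln (real (card (P l))) \<le> ln ((4::real) ^ (2 * l + 1))"
        using cardP cpos by simp
      also have "\<dots> = real (2 * l + 1) * ln 4" by (rule ln_realpow)
      also have "ln (4::real) = 2 * ln 2"
      proof -
        have "ln ((2::real) ^ 2) = real 2 * ln 2" by (rule ln_realpow)
        thus ?thesis by simp
      qed
      also have "real (2 * l + 1) * (2 * ln (2::real)) \<le> real (2 * l + 1) * 2"
        using ln_2_less_1 by (intro mult_left_mono) auto
      finally show ?thesis by simp
    qed
    have vP: "vr S (cD a) \<le> 16 * real k * (1/2) ^ l" if a: "a \<in> P l" for a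
    proof -
      obtain z where z: "z \<in> V (2 ^ K)" "a = (pjx K (Suc l) z, pjx K l z)" using a unfolding P_def by auto
      have "vr S (cD a) \<le> 16 * real k * 2 ^ (K - l) * (1/2) ^ (k * mt)"
      proof -
        have d1: "\<bar>real_of_int (fst (pjx K (Suc l) z) - fst (pjx K l z))\<bar> \<le> 2 ^ (K - l)"
          unfolding pjx_def fst_conv by (rule fl_diff[OF l])
        have d2: "\<bar>real_of_int (snd (pjx K (Suc l) z) - snd (pjx K l z))\<bar> \<le> 2 ^ (K - l)"
          unfolding pjx_def snd_conv by (rule fl_diff[OF l])
        show ?thesis unfolding S_def cD_def z(2) fst_conv snd_conv by (rule vr_diff[OF k d1 d2])
      qed
      also have "(2::real) ^ (K - l) * (1/2) ^ (k * mt) = (1/2) ^ l"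
      proof -
        have "(1/2::real) ^ (k * mt) = (1/2) ^ (K - l) * (1/2) ^ l"
          unfolding K_def[symmetric] using l by (simp add: power_add[symmetric])
        moreover have "(2::real) ^ (K - l) * (1/2) ^ (K - l) = 1" by (simp add: power_mult_distrib[symmetric])
        ultimately show ?thesis by (metis mult.assoc mult_1_left)
      qed
      hence "16 * real k * 2 ^ (K - l) * (1/2) ^ (k * mt) = 16 * real k * (1/2) ^ l" by (metis mult.assoc)
      finally show ?thesis .
    qed
    define lam where "lam = (4/3::real) ^ l / sqrt (real k)"
    have sk: "0 < sqrt (real k)" using k by simp
    have lam: "0 < lam" unfolding lam_def using sk by simp
    have em1: "integrable M (MP l)"
      unfolding MP_def[abs_def] by (rule emax(1)[OF g Sfin Pfin Pne vP lam])
    have "(\<integral>\<omega>. MP l \<omega> \<partial>M) \<le> ln (real (card (P l))) / lam + lam * (16 * real k * (1/2) ^ l) / 2"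
      unfolding MP_def by (rule emax(2)[OF g Sfin Pfin Pne vP lam])
    also have "\<dots> \<le> sqrt (real k) * fF l"
      unfolding lam_def using chain_alg[OF sk lncard] k by simp
    finally show ?thesis using em1 by simp
  qed
  have pw: "maxdiff k b n mt \<omega> \<le> F (0,0) \<omega> + (\<Sum>l<K. MP l \<omega>)" for \<omega>
    unfolding mx
  proof (subst Max_le_iff, simp, simp add: Vne, intro ballI)
    fix y assume "y \<in> (\<lambda>z. F z \<omega>) ` V (2 ^ K)"
    then obtain z where z: "z \<in> V (2 ^ K)" "y = F z \<omega>" by auto
    have zK: "pjx K K z = z" unfolding pjx_def fl_K by simp
    have z0: "pjx K 0 z = (0,0)" unfolding pjx_def using z(1) by (auto simp: V_def fl_0)
    have "F z \<omega> = F (pjx K 0 z) \<omega> + (\<Sum>l<K. F (pjx K (Suc l) z) \<omega> - F (pjx K l z) \<omega>)"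
      using sum_lessThan_telescope[of "\<lambda>l. F (pjx K l z) \<omega>" K] zK by simp
    also have "\<dots> \<le> F (0,0) \<omega> + (\<Sum>l<K. MP l \<omega>)"
    proof -
      have "F (pjx K (Suc l) z) \<omega> - F (pjx K l z) \<omega> \<le> MP l \<omega>" for l
      proof -
        have "F (pjx K (Suc l) z) \<omega> - F (pjx K l z) \<omega> = lin b S (cD (pjx K (Suc l) z, pjx K l z)) \<omega>"
          unfolding F_def cD_def by (simp add: lin_diff)
        also have "\<dots> \<le> MP l \<omega>" unfolding MP_def using z(1) Pfin
          by (intro Max_ge) (auto simp: P_def)
        finally show ?thesis .
      qed
      thus ?thesis unfolding z0 by (intro add_left_mono sum_mono) auto
    qed
    finally show "y \<le> F (0,0) \<omega> + (\<Sum>l<K. MP l \<omega>)" using z by simp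
  qed
  have intMP: "\<And>l. l \<in> {..<K} \<Longrightarrow> integrable M (MP l)" using EMP by auto
  have "(\<integral>\<omega>. maxdiff k b n mt \<omega> \<partial>M) \<le> (\<integral>\<omega>. F (0,0) \<omega> + (\<Sum>l<K. MP l \<omega>) \<partial>M)"
  proof (rule integral_mono[OF int_md _ pw])
    show "integrable M (\<lambda>\<omega>. F (0,0) \<omega> + (\<Sum>l<K. MP l \<omega>))"
      by (intro Bochner_Integration.integrable_add intF Bochner_Integration.integrable_sum intMP)
  qed
  also have "\<dots> = (\<integral>\<omega>. F (0,0) \<omega> \<partial>M) + (\<Sum>l<K. \<integral>\<omega>. MP l \<omega> \<partial>M)"
  proof -
    have iS: "integrable M (\<lambda>\<omega>. \<Sum>l<K. MP l \<omega>)"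
      by (intro Bochner_Integration.integrable_sum intMP)
    have "(\<integral>\<omega>. F (0,0) \<omega> + (\<Sum>l<K. MP l \<omega>) \<partial>M) = (\<integral>\<omega>. F (0,0) \<omega> \<partial>M) + (\<integral>\<omega>. (\<Sum>l<K. MP l \<omega>) \<partial>M)"
      by (rule Bochner_Integration.integral_add[OF intF iS])
    also have "(\<integral>\<omega>. (\<Sum>l<K. MP l \<omega>) \<partial>M) = (\<Sum>l<K. \<integral>\<omega>. MP l \<omega> \<partial>M)"
      by (rule Bochner_Integration.integral_sum[OF intMP])
    finally show ?thesis .
  qed
  also have "(\<integral>\<omega>. F (0,0) \<omega> \<partial>M) = 0" unfolding F_def by (rule gf_mean0[OF g Sfin])
  also have "(\<Sum>l<K. \<integral>\<omega>. MP l \<omega> \<partial>M) \<le> (\<Sum>l<K. sqrt (real k) * fF l)"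
    using EMP by (intro sum_mono) auto
  also have "\<dots> = sqrt (real k) * (\<Sum>l<K. fF l)" by (simp add: sum_distrib_left)
  also have "\<dots> \<le> sqrt (real k) * suminf fF"
    by (intro mult_left_mono sum_le_suminf summable_fF fF_nonneg) auto
  finally show ?thesis using int_md by simp
qed



theorem lemma3p6:
  shows "(\<exists>C_F::real. \<forall>(M::'a measure) b k n mt.
            gaussian_family M b \<and> 1 \<le> k \<and> 1 \<le> n \<and> 1 \<le> mt \<and> mt < n div k \<longrightarrow>
              integrable M (maxdiff k b n mt) \<and>
              integral\<^sup>L M (maxdiff k b n mt) \<le> sqrt (8 * real k) * C_F)
       \<and> (\<forall>\<delta>::real. \<forall>k::nat. \<delta> > 0 \<and> 1 \<le> k \<longrightarrow>
            (\<forall>\<^sub>F n in sequentially. \<forall>(M::'a measure) b mt.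
               gaussian_family M b \<and> 1 \<le> mt \<and> mt < n div k \<longrightarrow>
                 measure M {\<omega> \<in> space M. maxdiff k b n mt \<omega> > 2 * \<delta> * ln (2 ^ n)}
                 \<le> 2 * exp (- (\<delta>\<^sup>2 * (ln 2)\<^sup>2 / (2 * real k * (real (n div k) - real mt)))
                             * (real n)\<^sup>2)))"
proof (intro conjI)
  show "\<exists>C_F::real. \<forall>(M::'a measure) b k n mt.
            gaussian_family M b \<and> 1 \<le> k \<and> 1 \<le> n \<and> 1 \<le> mt \<and> mt < n div k \<longrightarrow>
              integrable M (maxdiff k b n mt) \<and>
              integral\<^sup>L M (maxdiff k b n mt) \<le> sqrt (8 * real k) * C_F"
  proof (intro exI[of _ "suminf fF / sqrt 8"] allI impI)
    fix M :: "'a measure" and b :: "nat \<times> (int \<times> int) \<Rightarrow> 'a \<Rightarrow> real" and k n mt :: nat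
    assume h: "gaussian_family M b \<and> 1 \<le> k \<and> 1 \<le> n \<and> 1 \<le> mt \<and> mt < n div k"
    have p: "integrable M (maxdiff k b n mt) \<and> (\<integral>\<omega>. maxdiff k b n mt \<omega> \<partial>M) \<le> sqrt (real k) * suminf fF"
      using h by (intro part1) auto
    have "sqrt (8 * real k) * (suminf fF / sqrt 8) = sqrt (real k) * suminf fF"
      by (simp add: real_sqrt_mult)
    thus "integrable M (maxdiff k b n mt) \<and> integral\<^sup>L M (maxdiff k b n mt) \<le> sqrt (8 * real k) * (suminf fF / sqrt 8)"
      using p by simp
  qed
next
  show "\<forall>\<delta>::real. \<forall>k::nat. \<delta> > 0 \<and> 1 \<le> k \<longrightarrow>
            (\<forall>\<^sub>F n in sequentially. \<forall>(M::'a measure) b mt.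
               gaussian_family M b \<and> 1 \<le> mt \<and> mt < n div k \<longrightarrow>
                 measure M {\<omega> \<in> space M. maxdiff k b n mt \<omega> > 2 * \<delta> * ln (2 ^ n)}
                 \<le> 2 * exp (- (\<delta>\<^sup>2 * (ln 2)\<^sup>2 / (2 * real k * (real (n div k) - real mt)))
                             * (real n)\<^sup>2))"
  proof (intro allI impI)
    fix \<delta> :: real and k :: nat
    assume dk: "\<delta> > 0 \<and> 1 \<le> k"
    define N where "N = nat \<lceil>86 * real k / (\<delta>\<^sup>2 * ln 2)\<rceil>"
    have pos: "0 < \<delta>\<^sup>2 * ln 2" using dk by simp
    show "\<forall>\<^sub>F n in sequentially. \<forall>(M::'a measure) b mt.
               gaussian_family M b \<and> 1 \<le> mt \<and> mt < n div k \<longrightarrow>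
                 measure M {\<omega> \<in> space M. maxdiff k b n mt \<omega> > 2 * \<delta> * ln (2 ^ n)}
                 \<le> 2 * exp (- (\<delta>\<^sup>2 * (ln 2)\<^sup>2 / (2 * real k * (real (n div k) - real mt)))
                             * (real n)\<^sup>2)"
      unfolding eventually_sequentially
    proof (intro exI[of _ N] allI impI)
      fix n :: nat and M :: "'a measure" and b :: "nat \<times> (int \<times> int) \<Rightarrow> 'a \<Rightarrow> real" and mt :: nat
      assume nN: "N \<le> n" and h: "gaussian_family M b \<and> 1 \<le> mt \<and> mt < n div k"
      have "86 * real k / (\<delta>\<^sup>2 * ln 2) \<le> real n"
        using nN unfolding N_def by linarith
      hence nb: "86 * real k \<le> \<delta>\<^sup>2 * ln 2 * real n"
        using pos by (simp add: pos_divide_le_eq mult.commute)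
      show "measure M {\<omega> \<in> space M. maxdiff k b n mt \<omega> > 2 * \<delta> * ln (2 ^ n)}
                 \<le> 2 * exp (- (\<delta>\<^sup>2 * (ln 2)\<^sup>2 / (2 * real k * (real (n div k) - real mt)))
                             * (real n)\<^sup>2)"
        using h dk nb by (intro part2) auto
    qed
  qed
qed


end
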